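(* Consider the discrete-time system $x_{k+1}=f(x_k,u_k,w_k)$, $y_k=h(x_k,v_k)$ with $x_k\in\mathbb{X}\subset\mathbb{R}^n$, $u_k\in\mathbb{U}\subseteq\mathbb{R}^m$, $w_k\in\mathbb{R}^q$, $v_k\in\mathbb{V}\subset\mathbb{R}^r$, $y_k\in\mathbb{Y}\subset\mathbb{R}^p$, $f,h$ continuously differentiable, $\mathbb{Z}:=\mathbb{X}\times\mathbb{U}\times\mathbb{R}^q\times\mathbb{V}\times\mathbb{Y}$. Assume $\mathbb{X},\mathbb{V},\mathbb{Y}$ are compact. Assume there is a diffeomorphism $T=(T_\flat,T_\sharp):\mathbb{R}^n\to\mathbb{R}^{n_\flat+n_\sharp}$ and a continuously differentiable $\psi:\mathbb{R}^p\times\mathbb{R}^{n_\sharp}\times\mathbb{R}^r\to\mathbb{R}^{n_\flat}$ such that, with $z=T(x)=(z^\flat,z^\sharp)$, $f_\sharp(z^\sharp,z^\flat,u,w):=T_\sharp(f(T^{-1}(z),u,w))$ and $h_T(z^\sharp,z^\flat,v):=h(T^{-1}(z),v)$, one has $z^\flat=\psi(y,z^\sharp,v)$ whenever $y=h_T(z^\sharp,z^\flat,v)$, and $\partial f_\sharp^i/\partial w\equiv0$ for all $i\in\{1,\dots,n_\sharp\}$. Define the reduced-order system $$z^\sharp_{k+1}=\hat{f}_\sharp(z^\sharp_k,\gamma_k,u_k,v_k):=f_\sharp\big(z^\sharp_k,\psi(\gamma_k,z^\sharp_k,v_k),u_k,w_k\big),\qquad y_k=\hat{h}_T(z^\sharp_k,\gamma_k,v_k):=h_T\big(z^\sharp_k,\psi(\gamma_k,z^\sharp_k,v_k),v_k\big),$$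 with fictitious input $\gamma_k\in\mathbb{R}^p$ (the right-hand side does not depend on $w_k$). Let $\overline{\mathbb{X}}:=T(\mathbb{X})$, $\overline{\mathbb{X}}_\sharp$ its projection onto the $z^\sharp$-coordinates and $\mathbb{Z}_\sharp:=\overline{\mathbb{X}}_\sharp\times\mathbb{Y}\times\mathbb{U}\times\mathbb{V}\times\mathbb{Y}$. If there exist $\beta\in\mathcal{K}_\infty$, $\beta_0\in\mathcal{KL}$ and summable $\mathcal{KL}$-functions $\beta_v,\beta_y,\beta_\gamma$ such that $$\beta(\|z^\sharp_k-\widetilde{z}^\sharp_k\|)\le\sum_{i=1}^k\beta_v(\|v_{k-i}-\widetilde{v}_{k-i}\|,i)+\sum_{i=1}^k\big(\beta_y(\|y_{k-i}-\widetilde{y}_{k-i}\|,i)+\beta_\gamma(\|\gamma_{k-i}-\widetilde{\gamma}_{k-i}\|,i)\big)+\beta_0(\|z^\sharp_0-\widetilde{z}^\sharp_0\|,k)$$ for all $k\ge0$ and any $(\boldsymbol{z}^\sharp,\boldsymbol{\gamma},\boldsymbol{u},\boldsymbol{v},\boldsymbol{y}),(\widetilde{\boldsymbol{z}}^\sharp,\widetilde{\boldsymbol{\gamma}},\boldsymbol{u},\widetilde{\boldsymbol{v}},\widetilde{\boldsymbol{y}})\in\mathbb{Z}_\sharp^\infty$ satisfying the reduced-order system, then the original system is strongly nonlinearly detectable.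
   Context: $\mathcal{K}$, $\mathcal{K}_\infty$, $\mathcal{KL}$ are the usual comparison function classes; a $\mathcal{KL}$-function $\beta$ is summable if there is $\alpha\in\mathcal{K}$ with $\sum_{k\ge0}\beta(r,k)\le\alpha(r)$ for all $r\ge0$. A solution of the original system is a sequence in $\mathbb{Z}^\infty$ satisfying its equations. The original system is strongly nonlinearly detectable if there exist $\alpha\in\mathcal{K}_\infty$, $\alpha_0\in\mathcal{KL}$ and summable $\alpha_v,\alpha_y\in\mathcal{KL}$ such that $\alpha(\|x_k-\widetilde{x}_k\|)\le\alpha_0(\|x_0-\widetilde{x}_0\|,k)+\sum_{i=0}^k(\alpha_v(\|v_{k-i}-\widetilde{v}_{k-i}\|,i)+\alpha_y(\|y_{k-i}-\widetilde{y}_{k-i}\|,i))$ for all $k\ge0$ and all pairs of solutions $(\boldsymbol{x},\boldsymbol{u},\boldsymbol{w},\boldsymbol{v},\boldsymbol{y}),(\widetilde{\boldsymbol{x}},\boldsymbol{u},\widetilde{\boldsymbol{w}},\widetilde{\boldsymbol{v}},\widetilde{\boldsymbol{y}})\in\mathbb{Z}^\infty$. *)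

theory Defs
  imports "HOL-Analysis.Analysis"
begin

definition classK :: "(real \<Rightarrow> real) \<Rightarrow> bool" where
  "classK \<alpha> \<longleftrightarrow> continuous_on {0..} \<alpha> \<and> \<alpha> 0 = 0 \<and> strict_mono_on {0..} \<alpha>"

definition classKinf :: "(real \<Rightarrow> real) \<Rightarrow> bool" where
  "classKinf \<alpha> \<longleftrightarrow> classK \<alpha> \<and> filterlim \<alpha> at_top at_top"

definition classKL :: "(real \<Rightarrow> nat \<Rightarrow> real) \<Rightarrow> bool" where
  "classKL \<beta> \<longleftrightarrow> (\<forall>t. classK (\<lambda>r. \<beta> r t)) \<and>
     (\<forall>r\<ge>0. decseq (\<lambda>t. \<beta> r t) \<and> (\<lambda>t. \<beta> r t) \<longlonglongrightarrow> 0)"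

definition summable_KL :: "(real \<Rightarrow> nat \<Rightarrow> real) \<Rightarrow> bool" where
  "summable_KL \<beta> \<longleftrightarrow> classKL \<beta> \<and>
     (\<exists>\<alpha>. classK \<alpha> \<and> (\<forall>r\<ge>0. \<forall>N. (\<Sum>k<N. \<beta> r k) \<le> \<alpha> r))"

definition C1_map :: "('a::euclidean_space \<Rightarrow> 'b::euclidean_space) \<Rightarrow> bool" where
  "C1_map g \<longleftrightarrow> (\<exists>D. (\<forall>x. (g has_derivative blinfun_apply (D x)) (at x)) \<and> continuous_on UNIV D)"

definition diffeo :: "('a::euclidean_space \<Rightarrow> 'b::euclidean_space) \<Rightarrow> bool" where
  "diffeo T \<longleftrightarrow> bij T \<and> C1_map T \<and> C1_map (inv T)"

definition orig_sol ::
  "('x \<Rightarrow> 'u \<Rightarrow> 'w \<Rightarrow> 'x) \<Rightarrow> ('x \<Rightarrow> 'v \<Rightarrow> 'y) \<Rightarrow> 'x set \<Rightarrow> 'u set \<Rightarrow> 'v set \<Rightarrow> 'y set \<Rightarrow>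
   (nat \<Rightarrow> 'x) \<Rightarrow> (nat \<Rightarrow> 'u) \<Rightarrow> (nat \<Rightarrow> 'w) \<Rightarrow> (nat \<Rightarrow> 'v) \<Rightarrow> (nat \<Rightarrow> 'y) \<Rightarrow> bool" where
  "orig_sol f h X U V Y x u w v y \<longleftrightarrow>
     (\<forall>k. x k \<in> X \<and> u k \<in> U \<and> v k \<in> V \<and> y k \<in> Y \<and>
          x (Suc k) = f (x k) (u k) (w k) \<and> y k = h (x k) (v k))"

definition strongly_nl_detectable ::
  "('x::real_normed_vector \<Rightarrow> 'u \<Rightarrow> 'w \<Rightarrow> 'x) \<Rightarrow> ('x \<Rightarrow> 'v::real_normed_vector \<Rightarrow> 'y::real_normed_vector)
   \<Rightarrow> 'x set \<Rightarrow> 'u set \<Rightarrow> 'v set \<Rightarrow> 'y set \<Rightarrow> bool" where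
  "strongly_nl_detectable f h X U V Y \<longleftrightarrow>
     (\<exists>\<alpha> \<alpha>0 \<alpha>v \<alpha>y. classKinf \<alpha> \<and> classKL \<alpha>0 \<and> summable_KL \<alpha>v \<and> summable_KL \<alpha>y \<and>
       (\<forall>x u w v y x' w' v' y' k.
          orig_sol f h X U V Y x u w v y \<longrightarrow> orig_sol f h X U V Y x' u w' v' y' \<longrightarrow>
          \<alpha> (norm (x k - x' k)) \<le> \<alpha>0 (norm (x 0 - x' 0)) k +
            (\<Sum>i\<le>k. \<alpha>v (norm (v (k - i) - v' (k - i))) i + \<alpha>y (norm (y (k - i) - y' (k - i))) i)))"

definition f_sharp ::
  "('x \<Rightarrow> 'zb \<times> 'zs) \<Rightarrow> ('x \<Rightarrow> 'u \<Rightarrow> 'w \<Rightarrow> 'x) \<Rightarrow> 'zs \<Rightarrow> 'zb \<Rightarrow> 'u \<Rightarrow> 'w \<Rightarrow> 'zs" where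
  "f_sharp T f zs zb u w = snd (T (f (inv T (zb, zs)) u w))"

definition h_T :: "('x \<Rightarrow> 'zb \<times> 'zs) \<Rightarrow> ('x \<Rightarrow> 'v \<Rightarrow> 'y) \<Rightarrow> 'zs \<Rightarrow> 'zb \<Rightarrow> 'v \<Rightarrow> 'y" where
  "h_T T h zs zb v = h (inv T (zb, zs)) v"

text \<open>The disturbance w k is a placeholder on which the right-hand side does not depend.\<close>
definition red_sol ::
  "('x \<Rightarrow> 'zb \<times> 'zs) \<Rightarrow> ('x \<Rightarrow> 'u \<Rightarrow> 'w \<Rightarrow> 'x) \<Rightarrow> ('x \<Rightarrow> 'v \<Rightarrow> 'y) \<Rightarrow> ('y \<Rightarrow> 'zs \<Rightarrow> 'v \<Rightarrow> 'zb) \<Rightarrow>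
   'x set \<Rightarrow> 'u set \<Rightarrow> 'v set \<Rightarrow> 'y set \<Rightarrow>
   (nat \<Rightarrow> 'zs) \<Rightarrow> (nat \<Rightarrow> 'y) \<Rightarrow> (nat \<Rightarrow> 'u) \<Rightarrow> (nat \<Rightarrow> 'v) \<Rightarrow> (nat \<Rightarrow> 'y) \<Rightarrow> bool" where
  "red_sol T f h \<psi> X U V Y zs \<gamma> u v y \<longleftrightarrow>
     (\<forall>k. zs k \<in> snd ` (T ` X) \<and> \<gamma> k \<in> Y \<and> u k \<in> U \<and> v k \<in> V \<and> y k \<in> Y \<and>
          (\<exists>w. zs (Suc k) = f_sharp T f (zs k) (\<psi> (\<gamma> k) (zs k) (v k)) (u k) w) \<and>
          y k = h_T T h (zs k) (\<psi> (\<gamma> k) (zs k) (v k)) (v k))"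

end

theory Submission
  imports Defs
begin

lemma C1_lipschitz:
  fixes g :: "'a::euclidean_space \<Rightarrow> 'b::euclidean_space"
  assumes "C1_map g" "compact S"
  shows "\<exists>L>0. \<forall>a\<in>S. \<forall>b\<in>S. norm (g a - g b) \<le> L * norm (a - b)"
proof -
  obtain D where D: "\<And>x. (g has_derivative blinfun_apply (D x)) (at x)" "continuous_on UNIV D"
    using assms(1) unfolding C1_map_def by blast
  let ?H = "convex hull S"
  have "compact ?H" using assms(2) by (rule compact_convex_hull)
  hence "compact (D ` ?H)" using D(2) by (intro compact_continuous_image continuous_on_subset[OF D(2)]) auto
  then obtain B where B: "\<And>x. x \<in> ?H \<Longrightarrow> norm (D x) \<le> B"
  proof -
    have "bounded (D ` ?H)" using \<open>compact (D ` ?H)\<close> by (rule compact_imp_bounded)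
    then obtain B where "\<forall>y\<in>D ` ?H. norm y \<le> B" unfolding bounded_iff by blast
    thus ?thesis using that by blast
  qed
  have "\<forall>a\<in>S. \<forall>b\<in>S. norm (g a - g b) \<le> (max B 1) * norm (a - b)"
  proof (intro ballI)
    fix a b assume "a \<in> S" "b \<in> S"
    show "norm (g a - g b) \<le> (max B 1) * norm (a - b)"
    proof (rule differentiable_bound[of ?H g "\<lambda>x. blinfun_apply (D x)"])
      show "convex ?H" by simp
      show "(g has_derivative blinfun_apply (D x)) (at x within ?H)" for x
        by (rule has_derivative_at_withinI[OF D(1)])
      show "onorm (blinfun_apply (D x)) \<le> max B 1" if "x \<in> ?H" for x
        using B[OF that] unfolding norm_blinfun.rep_eq[symmetric] by linarith
      show "a \<in> ?H" using \<open>a \<in> S\<close> hull_inc by metis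
      show "b \<in> ?H" using \<open>b \<in> S\<close> hull_inc by metis
    qed
  qed
  thus ?thesis by (intro exI[of _ "max B 1"]) auto
qed

lemma C1_cont: assumes "C1_map g" shows "continuous_on A g"
proof -
  obtain D where D: "\<And>x. (g has_derivative blinfun_apply (D x)) (at x)"
    using assms unfolding C1_map_def by blast
  show ?thesis
    by (rule has_derivative_continuous_on[of A g "\<lambda>x. blinfun_apply (D x)"])
       (rule has_derivative_at_withinI[OF D])
qed


lemma classK_nonneg: "classK a \<Longrightarrow> 0 \<le> r \<Longrightarrow> 0 \<le> a r"
  unfolding classK_def
  by (metis atLeast_iff order.refl order_le_less strict_mono_onD)

lemma classK_mono: "classK a \<Longrightarrow> 0 \<le> r \<Longrightarrow> r \<le> s \<Longrightarrow> a r \<le> a s"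
  unfolding classK_def
  by (metis atLeast_iff order.trans order_le_less strict_mono_onD)

lemma classK_add: "classK a \<Longrightarrow> classK b \<Longrightarrow> classK (\<lambda>r. a r + b r)"
  unfolding classK_def strict_mono_on_def
  by (auto intro!: continuous_on_add add_strict_mono)

lemma classK_cmult: "classK a \<Longrightarrow> 0 < c \<Longrightarrow> classK (\<lambda>r. a r * c)"
  unfolding classK_def strict_mono_on_def
  by (auto intro!: continuous_on_mult continuous_on_const)

lemma classK_scale:
  assumes "classK a" "0 < c" shows "classK (\<lambda>r. a (c * r))"
proof -
  have c: "continuous_on {0..} a" "a 0 = 0" "strict_mono_on {0..} a" using assms(1) unfolding classK_def by auto
  have "continuous_on {0..} (a \<circ> (\<lambda>r. c * r))"
    by (rule continuous_on_compose) (auto intro!: continuous_intros continuous_on_subset[OF c(1)] simp: assms(2) less_imp_le)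
  moreover have "strict_mono_on {0..} (\<lambda>r. a (c * r))"
    unfolding strict_mono_on_def using c(3) assms(2)
    by (auto intro!: strict_mono_onD[OF c(3)] simp: zero_le_mult_iff)
  ultimately show ?thesis using c(2) unfolding classK_def by (simp add: o_def)
qed

lemma classKinf_scale:
  assumes "classKinf a" "0 < c" shows "classKinf (\<lambda>r. a (c * r))"
proof -
  have "filterlim (\<lambda>r. c * r) at_top at_top"
    by (rule filterlim_tendsto_pos_mult_at_top[OF tendsto_const assms(2) filterlim_ident])
  hence "filterlim (\<lambda>r. a (c * r)) at_top at_top"
    using assms(1) unfolding classKinf_def using filterlim_compose by blast
  thus ?thesis using assms classK_scale unfolding classKinf_def by blast
qed

lemma classKL_scale:
  assumes "classKL b" "0 < c" shows "classKL (\<lambda>r t. b (c * r) t)"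
  using assms unfolding classKL_def
  by (auto intro: classK_scale)

lemma classKL_add: "classKL a \<Longrightarrow> classKL b \<Longrightarrow> classKL (\<lambda>r t. a r t + b r t)"
  unfolding classKL_def
  by (auto intro!: classK_add add_mono tendsto_add_zero simp: decseq_def)

lemma summable_KL_add: "summable_KL a \<Longrightarrow> summable_KL b \<Longrightarrow> summable_KL (\<lambda>r t. a r t + b r t)"
  unfolding summable_KL_def
proof (elim conjE exE, intro conjI)
  fix \<alpha>1 \<alpha>2 assume h: "classKL a" "classKL b" "classK \<alpha>1" "classK \<alpha>2"
    "\<forall>r\<ge>0. \<forall>N. (\<Sum>k<N. a r k) \<le> \<alpha>1 r" "\<forall>r\<ge>0. \<forall>N. (\<Sum>k<N. b r k) \<le> \<alpha>2 r"
  show "classKL (\<lambda>r t. a r t + b r t)" using h classKL_add by blast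
  show "\<exists>\<alpha>. classK \<alpha> \<and> (\<forall>r\<ge>0. \<forall>N. (\<Sum>k<N. a r k + b r k) \<le> \<alpha> r)"
    using h by (intro exI[of _ "\<lambda>r. \<alpha>1 r + \<alpha>2 r"]) (auto simp: sum.distrib intro: classK_add add_mono)
qed

lemma summable_KL_geo:
  assumes "classK a" shows "summable_KL (\<lambda>r t. a r * (1/2) ^ t)"
  unfolding summable_KL_def classKL_def
proof (intro conjI allI impI)
  fix t show "classK (\<lambda>r. a r * (1/2) ^ t)" using assms by (rule classK_cmult) simp
next
  fix r :: real assume r: "0 \<le> r"
  have nn: "0 \<le> a r" using classK_nonneg[OF assms r] .
  show "decseq (\<lambda>t. a r * (1/2) ^ t)"
    unfolding decseq_def using nn by (auto intro!: mult_left_mono power_decreasing)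
  show "(\<lambda>t. a r * (1/2) ^ t) \<longlonglongrightarrow> 0"
    by (rule tendsto_mult_right_zero) (rule LIMSEQ_power_zero, simp)
next
  show "\<exists>\<alpha>. classK \<alpha> \<and> (\<forall>r\<ge>0. \<forall>N. (\<Sum>k<N. a r * (1/2) ^ k) \<le> \<alpha> r)"
  proof (intro exI[of _ "\<lambda>r. a r * 2"] conjI allI impI)
    show "classK (\<lambda>r. a r * 2)" using assms by (rule classK_cmult) simp
    fix r :: real and N assume r: "0 \<le> r"
    have nn: "0 \<le> a r" using classK_nonneg[OF assms r] .
    have "(\<Sum>k<N. (1/2::real) ^ k) = (1 - (1/2)^N) / (1 - 1/2)"
      by (subst sum_gp_strict) simp
    also have "\<dots> \<le> 2" by simp
    finally have "(\<Sum>k<N. (1/2::real) ^ k) \<le> 2" .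
    thus "(\<Sum>k<N. a r * (1/2) ^ k) \<le> a r * 2"
      by (simp add: sum_distrib_left[symmetric] mult_left_mono nn)
  qed
qed

lemma orig_to_red:
  assumes sol: "orig_sol f h X U V Y x u w v y" and injT: "inj T"
    and psi_inv: "\<And>zs zb v y. y = h_T T h zs zb v \<Longrightarrow> zb = \<psi> y zs v"
  shows "red_sol T f h \<psi> X U V Y (\<lambda>k. snd (T (x k))) y u v y"
    and "\<And>k. T (x k) = (\<psi> (y k) (snd (T (x k))) (v k), snd (T (x k)))"
proof -
  have zb: "fst (T (x k)) = \<psi> (y k) (snd (T (x k))) (v k)" for k
  proof (rule psi_inv)
    have "inv T (fst (T (x k)), snd (T (x k))) = x k" using injT by simp
    thus "y k = h_T T h (snd (T (x k))) (fst (T (x k))) (v k)"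
      using sol unfolding orig_sol_def h_T_def by simp
  qed
  show TT: "T (x k) = (\<psi> (y k) (snd (T (x k))) (v k), snd (T (x k)))" for k
    using zb[of k] by (metis prod.collapse)
  show "red_sol T f h \<psi> X U V Y (\<lambda>k. snd (T (x k))) y u v y"
    unfolding red_sol_def
  proof (intro allI conjI)
    fix k
    have xk: "x k \<in> X" "u k \<in> U" "v k \<in> V" "y k \<in> Y"
      "x (Suc k) = f (x k) (u k) (w k)" "y k = h (x k) (v k)"
      using sol unfolding orig_sol_def by blast+
    have iv: "inv T (\<psi> (y k) (snd (T (x k))) (v k), snd (T (x k))) = x k"
      using TT[of k] injT by (metis inv_f_f)
    show "snd (T (x k)) \<in> snd ` T ` X" using xk by blast
    show "y k \<in> Y" by (rule xk(4))
    show "u k \<in> U" by (rule xk(2))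
    show "v k \<in> V" by (rule xk(3))
    show "y k \<in> Y" by (rule xk(4))
    show "\<exists>w. snd (T (x (Suc k))) = f_sharp T f (snd (T (x k))) (\<psi> (y k) (snd (T (x k))) (v k)) (u k) w"
      by (rule exI[of _ "w k"]) (simp add: f_sharp_def iv xk(5))
    show "y k = h_T T h (snd (T (x k))) (\<psi> (y k) (snd (T (x k))) (v k)) (v k)"
      unfolding h_T_def iv by (rule xk(6))
  qed
qed

lemma aux3: fixes M :: real shows "a1 \<le> M \<Longrightarrow> a2 \<le> M \<Longrightarrow> a3 \<le> M \<Longrightarrow> s \<le> (a1+a2+a3)/3 \<Longrightarrow> s \<le> M"
  by (simp add: field_simps)

lemma beta_max3:
  assumes "classK b" "0 \<le> a1" "0 \<le> a2" "0 \<le> a3" "0 \<le> s" "s \<le> (a1 + a2 + a3) / 3"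
  shows "b s \<le> b a1 + b a2 + b a3"
proof -
  have m: "a1 \<le> max a1 (max a2 a3)" "a2 \<le> max a1 (max a2 a3)" "a3 \<le> max a1 (max a2 a3)" by auto
  have "s \<le> max a1 (max a2 a3)" by (rule aux3[OF m assms(6)])
  hence "b s \<le> b (max a1 (max a2 a3))" using classK_mono[OF assms(1) assms(5)] by blast
  moreover have "0 \<le> b a1" "0 \<le> b a2" "0 \<le> b a3" using classK_nonneg assms by blast+
  ultimately show ?thesis by (simp add: max_def split: if_splits)
qed

theorem lemma3:
  fixes f :: "'x::euclidean_space \<Rightarrow> 'u::euclidean_space \<Rightarrow> 'w::euclidean_space \<Rightarrow> 'x"
    and h :: "'x \<Rightarrow> 'v::euclidean_space \<Rightarrow> 'y::euclidean_space"
    and X :: "'x set" and U :: "'u set" and V :: "'v set" and Y :: "'y set"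
    and T :: "'x \<Rightarrow> 'zb::euclidean_space \<times> 'zs::euclidean_space"
    and \<psi> :: "'y \<Rightarrow> 'zs \<Rightarrow> 'v \<Rightarrow> 'zb"
  assumes f_C1: "C1_map (\<lambda>(x, u, w). f x u w)"
    and h_C1: "C1_map (\<lambda>(x, v). h x v)"
    and X_compact: "compact X" and V_compact: "compact V" and Y_compact: "compact Y"
    and T_diffeo: "diffeo T"
    and psi_C1: "C1_map (\<lambda>(y, zs, v). \<psi> y zs v)"
    and psi_inv: "\<And>zs zb v y. y = h_T T h zs zb v \<Longrightarrow> zb = \<psi> y zs v"
    and f_sharp_w: "\<And>zs zb u w. ((\<lambda>w'. f_sharp T f zs zb u w') has_derivative (\<lambda>_. 0)) (at w)"
    and reduced_det: "\<exists>\<beta> \<beta>0 \<beta>v \<beta>y \<beta>\<gamma>. classKinf \<beta> \<and> classKL \<beta>0 \<and>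
        summable_KL \<beta>v \<and> summable_KL \<beta>y \<and> summable_KL \<beta>\<gamma> \<and>
        (\<forall>zs \<gamma> u v y zs' \<gamma>' v' y' k.
           red_sol T f h \<psi> X U V Y zs \<gamma> u v y \<longrightarrow> red_sol T f h \<psi> X U V Y zs' \<gamma>' u v' y' \<longrightarrow>
           \<beta> (norm (zs k - zs' k)) \<le>
             (\<Sum>i=1..k. \<beta>v (norm (v (k - i) - v' (k - i))) i) +
             (\<Sum>i=1..k. \<beta>y (norm (y (k - i) - y' (k - i))) i + \<beta>\<gamma> (norm (\<gamma> (k - i) - \<gamma>' (k - i))) i) +
             \<beta>0 (norm (zs 0 - zs' 0)) k)"
  shows "strongly_nl_detectable f h X U V Y"
proof -
  obtain \<beta> \<beta>0 \<beta>v \<beta>y \<beta>\<gamma> where B: "classKinf \<beta>" "classKL \<beta>0"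
      "summable_KL \<beta>v" "summable_KL \<beta>y" "summable_KL \<beta>\<gamma>"
    and P: "\<And>zs \<gamma> u v y zs' \<gamma>' v' y' k.
           red_sol T f h \<psi> X U V Y zs \<gamma> u v y \<Longrightarrow> red_sol T f h \<psi> X U V Y zs' \<gamma>' u v' y' \<Longrightarrow>
           \<beta> (norm (zs k - zs' k)) \<le>
             (\<Sum>i=1..k. \<beta>v (norm (v (k - i) - v' (k - i))) i) +
             (\<Sum>i=1..k. \<beta>y (norm (y (k - i) - y' (k - i))) i + \<beta>\<gamma> (norm (\<gamma> (k - i) - \<gamma>' (k - i))) i) +
             \<beta>0 (norm (zs 0 - zs' 0)) k"
    using reduced_det by blast
  have bK: "classK \<beta>" using B(1) unfolding classKinf_def by blast
  have T1: "C1_map T" and T2: "C1_map (inv T)" and injT: "inj T"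
    using T_diffeo unfolding diffeo_def bij_def by auto
  obtain LT where LT: "LT > 0" "\<And>a b. a \<in> X \<Longrightarrow> b \<in> X \<Longrightarrow> norm (T a - T b) \<le> LT * norm (a - b)"
    using C1_lipschitz[OF T1 X_compact] by blast
  have cTX: "compact (T ` X)"
    by (rule compact_continuous_image[OF C1_cont[OF T1] X_compact])
  obtain L1 where L1: "L1 > 0" "\<And>a b. a \<in> T ` X \<Longrightarrow> b \<in> T ` X \<Longrightarrow> norm (inv T a - inv T b) \<le> L1 * norm (a - b)"
    using C1_lipschitz[OF T2 cTX] by blast
  have cK: "compact (Y \<times> (snd ` T ` X) \<times> V)"
    using Y_compact V_compact compact_continuous_image[OF continuous_on_snd[OF continuous_on_id] cTX]
    by (intro compact_Times) auto
  obtain Lp where Lp: "Lp > 0" "\<And>a b. a \<in> Y \<times> (snd ` T ` X) \<times> V \<Longrightarrow> b \<in> Y \<times> (snd ` T ` X) \<times> V \<Longrightarrow>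
      norm ((\<lambda>(y, zs, v). \<psi> y zs v) a - (\<lambda>(y, zs, v). \<psi> y zs v) b) \<le> Lp * norm (a - b)"
    using C1_lipschitz[OF psi_C1 cK] by blast
  define M where "M = L1 * (Lp + 1)"
  have M: "M > 0" using L1 Lp unfolding M_def by simp
  define \<alpha> where "\<alpha> = (\<lambda>s. \<beta> ((1 / (3 * M)) * s))"
  define \<alpha>0 where "\<alpha>0 = (\<lambda>r t. \<beta>0 (LT * r) t)"
  define \<alpha>v where "\<alpha>v = (\<lambda>r t. \<beta>v r t + \<beta> r * (1/2) ^ t)"
  define \<alpha>y where "\<alpha>y = (\<lambda>r t. (\<beta>y r t + \<beta>\<gamma> r t) + \<beta> r * (1/2) ^ t)"
  have A: "classKinf \<alpha>" unfolding \<alpha>_def using M by (intro classKinf_scale B(1)) simp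
  have A0: "classKL \<alpha>0" unfolding \<alpha>0_def using LT by (intro classKL_scale B(2))
  have Av: "summable_KL \<alpha>v" unfolding \<alpha>v_def
    by (intro summable_KL_add B(3) summable_KL_geo bK)
  have Ay: "summable_KL \<alpha>y" unfolding \<alpha>y_def
    by (intro summable_KL_add B(4) B(5) summable_KL_geo bK)
  have b0K: "\<And>t. classK (\<lambda>r. \<beta>0 r t)" using B(2) unfolding classKL_def by blast
  have bvK: "\<And>t. classK (\<lambda>r. \<beta>v r t)" using B(3) unfolding summable_KL_def classKL_def by blast
  have byK: "\<And>t. classK (\<lambda>r. \<beta>y r t)" using B(4) unfolding summable_KL_def classKL_def by blast
  have bgK: "\<And>t. classK (\<lambda>r. \<beta>\<gamma> r t)" using B(5) unfolding summable_KL_def classKL_def by blast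
  show ?thesis
    unfolding strongly_nl_detectable_def
  proof (rule exI[of _ \<alpha>], rule exI[of _ \<alpha>0], rule exI[of _ \<alpha>v], rule exI[of _ \<alpha>y], intro conjI A A0 Av Ay allI impI)
    fix x u w v y x' w' v' y' k
    assume s1: "orig_sol f h X U V Y x u w v y" and s2: "orig_sol f h X U V Y x' u w' v' y'"
    define zs where "zs = (\<lambda>k. snd (T (x k)))"
    define zs' where "zs' = (\<lambda>k. snd (T (x' k)))"
    have r1: "red_sol T f h \<psi> X U V Y zs y u v y" and TT1: "\<And>k. T (x k) = (\<psi> (y k) (zs k) (v k), zs k)"
      using orig_to_red[where \<psi>=\<psi>, OF s1 injT psi_inv] unfolding zs_def by auto
    have r2: "red_sol T f h \<psi> X U V Y zs' y' u v' y'" and TT2: "\<And>k. T (x' k) = (\<psi> (y' k) (zs' k) (v' k), zs' k)"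
      using orig_to_red[where \<psi>=\<psi>, OF s2 injT psi_inv] unfolding zs'_def by auto
    have mem: "x j \<in> X" "x' j \<in> X" "y j \<in> Y" "y' j \<in> Y" "v j \<in> V" "v' j \<in> V" for j
      using s1 s2 unfolding orig_sol_def by blast+
    have PP: "\<beta> (norm (zs k - zs' k)) \<le>
             (\<Sum>i=1..k. \<beta>v (norm (v (k - i) - v' (k - i))) i) +
             (\<Sum>i=1..k. \<beta>y (norm (y (k - i) - y' (k - i))) i + \<beta>\<gamma> (norm (y (k - i) - y' (k - i))) i) +
             \<beta>0 (norm (zs 0 - zs' 0)) k"
      by (rule P[OF r1 r2])
    define a where "a = norm (y k - y' k)"
    define b where "b = norm (zs k - zs' k)"
    define c where "c = norm (v k - v' k)"
    have abc: "0 \<le> a" "0 \<le> b" "0 \<le> c" unfolding a_def b_def c_def by auto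
    have "norm ((\<lambda>(y, zs, v). \<psi> y zs v) (y k, zs k, v k) - (\<lambda>(y, zs, v). \<psi> y zs v) (y' k, zs' k, v' k))
          \<le> Lp * norm ((y k, zs k, v k) - (y' k, zs' k, v' k))"
      by (rule Lp(2)) (auto simp: mem zs_def zs'_def)
    also have "norm ((y k, zs k, v k) - (y' k, zs' k, v' k)) \<le> a + b + c"
    proof -
      have "norm ((y k, zs k, v k) - (y' k, zs' k, v' k)) = norm (y k - y' k, zs k - zs' k, v k - v' k)" by simp
      also have "\<dots> \<le> a + norm (zs k - zs' k, v k - v' k)" unfolding a_def by (rule norm_Pair_le)
      also have "norm (zs k - zs' k, v k - v' k) \<le> b + c" unfolding b_def c_def by (rule norm_Pair_le)
      finally show ?thesis by simp
    qed
    finally have pb: "norm (\<psi> (y k) (zs k) (v k) - \<psi> (y' k) (zs' k) (v' k)) \<le> Lp * (a + b + c)"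
      using Lp(1) by (simp add: order_trans mult_left_mono)
    have "norm (T (x k) - T (x' k)) \<le> norm (\<psi> (y k) (zs k) (v k) - \<psi> (y' k) (zs' k) (v' k)) + b"
      unfolding b_def by (subst TT1, subst TT2) (simp add: norm_Pair_le)
    also have "\<dots> \<le> (Lp + 1) * (a + b + c)" using pb abc by (simp add: algebra_simps)
    finally have Tb: "norm (T (x k) - T (x' k)) \<le> (Lp + 1) * (a + b + c)" .
    have "norm (x k - x' k) = norm (inv T (T (x k)) - inv T (T (x' k)))" using injT by simp
    also have "\<dots> \<le> L1 * norm (T (x k) - T (x' k))" by (rule L1(2)) (auto simp: mem)
    also have "\<dots> \<le> L1 * ((Lp + 1) * (a + b + c))" using Tb L1(1) by (simp add: mult_left_mono)
    finally have xb: "norm (x k - x' k) \<le> M * (a + b + c)" unfolding M_def by simp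
    have "\<alpha> (norm (x k - x' k)) \<le> \<beta> a + \<beta> b + \<beta> c"
      unfolding \<alpha>_def
    proof (rule beta_max3[OF bK abc])
      show "0 \<le> 1 / (3 * M) * norm (x k - x' k)" using M by simp
      have "1 / (3 * M) * norm (x k - x' k) \<le> 1 / (3 * M) * (M * (a + b + c))"
        using xb M by (intro mult_left_mono) auto
      also have "\<dots> = (a + b + c) / 3" using M by (simp add: field_simps)
      finally show "1 / (3 * M) * norm (x k - x' k) \<le> (a + b + c) / 3" .
    qed
    have "norm (zs 0 - zs' 0) \<le> norm (T (x 0) - T (x' 0))"
      unfolding zs_def zs'_def by (metis norm_snd_le snd_diff prod.collapse)
    also have "\<dots> \<le> LT * norm (x 0 - x' 0)" by (rule LT(2)) (auto simp: mem)
    finally have "\<beta>0 (norm (zs 0 - zs' 0)) k \<le> \<alpha>0 (norm (x 0 - x' 0)) k"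
      unfolding \<alpha>0_def by (intro classK_mono[OF b0K]) auto
    define g where "g = (\<lambda>i. \<alpha>v (norm (v (k - i) - v' (k - i))) i + \<alpha>y (norm (y (k - i) - y' (k - i))) i)"
    have split: "(\<Sum>i\<le>k. g i) = g 0 + (\<Sum>i=1..k. g i)"
    proof -
      have "{..k} = insert 0 {1..k}" by auto
      thus ?thesis by simp
    qed
    have g0: "\<beta> a + \<beta> c \<le> g 0"
    proof -
      have "0 \<le> \<beta>v c 0" "0 \<le> \<beta>y a 0" "0 \<le> \<beta>\<gamma> a 0"
        using classK_nonneg[OF bvK] classK_nonneg[OF byK] classK_nonneg[OF bgK] abc by auto
      thus ?thesis unfolding g_def \<alpha>v_def \<alpha>y_def a_def c_def by simp
    qed
    have gi: "(\<Sum>i=1..k. \<beta>v (norm (v (k - i) - v' (k - i))) i) +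
             (\<Sum>i=1..k. \<beta>y (norm (y (k - i) - y' (k - i))) i + \<beta>\<gamma> (norm (y (k - i) - y' (k - i))) i)
            \<le> (\<Sum>i=1..k. g i)"
      unfolding sum.distrib[symmetric] g_def \<alpha>v_def \<alpha>y_def
    proof (rule sum_mono)
      fix i
      have "0 \<le> \<beta> (norm (v (k - i) - v' (k - i)))" "0 \<le> \<beta> (norm (y (k - i) - y' (k - i)))"
        using classK_nonneg[OF bK] by auto
      thus "\<beta>v (norm (v (k - i) - v' (k - i))) i +
         (\<beta>y (norm (y (k - i) - y' (k - i))) i + \<beta>\<gamma> (norm (y (k - i) - y' (k - i))) i)
         \<le> \<beta>v (norm (v (k - i) - v' (k - i))) i + \<beta> (norm (v (k - i) - v' (k - i))) * (1 / 2) ^ i +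
         (\<beta>y (norm (y (k - i) - y' (k - i))) i + \<beta>\<gamma> (norm (y (k - i) - y' (k - i))) i +
          \<beta> (norm (y (k - i) - y' (k - i))) * (1 / 2) ^ i)"
        by simp
    qed
    show "\<alpha> (norm (x k - x' k)) \<le> \<alpha>0 (norm (x 0 - x' 0)) k +
            (\<Sum>i\<le>k. \<alpha>v (norm (v (k - i) - v' (k - i))) i + \<alpha>y (norm (y (k - i) - y' (k - i))) i)"
    proof -
      have e: "(\<Sum>i\<le>k. \<alpha>v (norm (v (k - i) - v' (k - i))) i + \<alpha>y (norm (y (k - i) - y' (k - i))) i)
          = g 0 + (\<Sum>i=1..k. g i)" using split unfolding g_def .
      have bb: "\<beta> b = \<beta> (norm (zs k - zs' k))" unfolding b_def ..
      show ?thesis unfolding e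
        using \<open>\<alpha> (norm (x k - x' k)) \<le> \<beta> a + \<beta> b + \<beta> c\<close> PP
          \<open>\<beta>0 (norm (zs 0 - zs' 0)) k \<le> \<alpha>0 (norm (x 0 - x' 0)) k\<close> g0 gi bb by linarith
    qed
  qed
qed

end
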